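(* The set $\mathcal{L}$ of $L$-convex polyominoes equals $Av_{\mathfrak{P}}(H,V,S_1,S_2)$, where $H=\begin{bmatrix}1&0&1\end{bmatrix}$, $V=\begin{bmatrix}1\\0\\1\end{bmatrix}$, $S_1=\begin{bmatrix}1&0\\0&1\end{bmatrix}$ and $S_2=\begin{bmatrix}0&1\\1&0\end{bmatrix}$.
   Context: A polyomino is a finite union of unit cells of $\mathbb{Z}\times\mathbb{Z}$ that is connected via edge adjacency, up to translation, identified with the binary matrix of its minimal bounding rectangle (entry $1$ iff the corresponding unit square is a cell; rows numbered bottom to top, first written row of a displayed matrix is the top row). A matrix is a submatrix of another if obtained by deleting rows and/or columns; $Av_{\mathfrak{P}}(\mathcal{M})$ is the set of polyominoes with no submatrix in $\mathcal{M}$. A polyomino is convex if each of its rows and each of its columns is connected. A path in a polyomino is a sequence of distinct cells of the polyomino in which consecutive cells share an edge; it is monotone if all its horizontal steps go in the same direction and all its vertical steps go in the same direction; a change of direction is a place where a horizontal step is followed by a vertical one or vice versa. A polyomino is $L$-convex if it is convex and every pair of its cells can be connected by a monotone path with at most one change of direction. *)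

theory Defs
  imports Main
begin

type_synonym cell = "int \<times> int"  (* (column x, row y); rows numbered bottom to top *)

definition adjacent :: "cell \<Rightarrow> cell \<Rightarrow> bool" where
  "adjacent p q \<longleftrightarrow> \<bar>fst p - fst q\<bar> + \<bar>snd p - snd q\<bar> = 1"

(* a (representative of a) polyomino: finite nonempty edge-connected set of cells *)
definition polyomino :: "cell set \<Rightarrow> bool" where
  "polyomino P \<longleftrightarrow> finite P \<and> P \<noteq> {} \<and>
     (\<forall>p\<in>P. \<forall>q\<in>P. (\<lambda>a b. a \<in> P \<and> b \<in> P \<and> adjacent a b)\<^sup>*\<^sup>* p q)"

(* binary matrix given as a list of rows; first list = top row *)
definition is_binmatrix :: "nat list list \<Rightarrow> bool" where
  "is_binmatrix M \<longleftrightarrow> M \<noteq> [] \<and> (\<forall>r\<in>set M. length r = length (hd M) \<and> set r \<subseteq> {0,1})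
     \<and> length (hd M) > 0"

(* M is a submatrix of the bounding-box matrix of P: choose rows f 0 < ... < f (m-1)
   (bottom to top) and columns g 0 < ... < g (n-1) of the bounding box *)
definition contains_pattern :: "cell set \<Rightarrow> nat list list \<Rightarrow> bool" where
  "contains_pattern P M \<longleftrightarrow>
     (let m = length M; n = length (hd M) in
      \<exists>f g :: nat \<Rightarrow> int.
        strict_mono_on {0..<m} f \<and> strict_mono_on {0..<n} g \<and>
        (\<forall>i<m. Min (snd ` P) \<le> f i \<and> f i \<le> Max (snd ` P)) \<and>
        (\<forall>j<n. Min (fst ` P) \<le> g j \<and> g j \<le> Max (fst ` P)) \<and>
        (\<forall>i<m. \<forall>j<n. ((g j, f i) \<in> P) \<longleftrightarrow> M ! (m - 1 - i) ! j = 1))"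

definition avoids :: "cell set \<Rightarrow> nat list list set \<Rightarrow> bool" where
  "avoids P \<M> \<longleftrightarrow> (\<forall>M\<in>\<M>. \<not> contains_pattern P M)"

definition convex_polyomino :: "cell set \<Rightarrow> bool" where
  "convex_polyomino P \<longleftrightarrow> polyomino P \<and>
     (\<forall>y x1 x2 x. (x1, y) \<in> P \<longrightarrow> (x2, y) \<in> P \<longrightarrow> x1 \<le> x \<longrightarrow> x \<le> x2 \<longrightarrow> (x, y) \<in> P) \<and>
     (\<forall>x y1 y2 y. (x, y1) \<in> P \<longrightarrow> (x, y2) \<in> P \<longrightarrow> y1 \<le> y \<longrightarrow> y \<le> y2 \<longrightarrow> (x, y) \<in> P)"

definition is_path :: "cell set \<Rightarrow> cell list \<Rightarrow> bool" where
  "is_path P xs \<longleftrightarrow> xs \<noteq> [] \<and> distinct xs \<and> set xs \<subseteq> P \<and>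
     (\<forall>i. Suc i < length xs \<longrightarrow> adjacent (xs ! i) (xs ! Suc i))"

definition step :: "cell list \<Rightarrow> nat \<Rightarrow> int \<times> int" where
  "step xs i = (fst (xs ! Suc i) - fst (xs ! i), snd (xs ! Suc i) - snd (xs ! i))"

definition horizontal_step :: "cell list \<Rightarrow> nat \<Rightarrow> bool" where
  "horizontal_step xs i \<longleftrightarrow> snd (step xs i) = 0"

definition monotone_path :: "cell list \<Rightarrow> bool" where
  "monotone_path xs \<longleftrightarrow>
     (\<forall>i j. Suc i < length xs \<longrightarrow> Suc j < length xs \<longrightarrow>
        horizontal_step xs i \<longrightarrow> horizontal_step xs j \<longrightarrow> step xs i = step xs j) \<and>
     (\<forall>i j. Suc i < length xs \<longrightarrow> Suc j < length xs \<longrightarrow>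
        \<not> horizontal_step xs i \<longrightarrow> \<not> horizontal_step xs j \<longrightarrow> step xs i = step xs j)"

definition direction_changes :: "cell list \<Rightarrow> nat" where
  "direction_changes xs = card {i. Suc (Suc i) < length xs \<and>
      horizontal_step xs i \<noteq> horizontal_step xs (Suc i)}"

definition L_convex :: "cell set \<Rightarrow> bool" where
  "L_convex P \<longleftrightarrow> convex_polyomino P \<and>
     (\<forall>p\<in>P. \<forall>q\<in>P. \<exists>xs. is_path P xs \<and> hd xs = p \<and> last xs = q \<and>
        monotone_path xs \<and> direction_changes xs \<le> 1)"

definition pat_H :: "nat list list" where "pat_H = [[1,0,1]]"
definition pat_V :: "nat list list" where "pat_V = [[1],[0],[1]]"
definition pat_S1 :: "nat list list" where "pat_S1 = [[1,0],[0,1]]"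
definition pat_S2 :: "nat list list" where "pat_S2 = [[0,1],[1,0]]"

end

theory Submission
  imports Defs
begin

lemma mem_bb:
  assumes "finite P" "(x,y) \<in> P"
  shows "Min (snd ` P) \<le> y \<and> y \<le> Max (snd ` P) \<and> Min (fst ` P) \<le> x \<and> x \<le> Max (fst ` P)"
proof -
  have "y \<in> snd ` P" "x \<in> fst ` P" using assms(2) by force+
  thus ?thesis
    using assms(1) by auto
qed

lemma H_imp: "contains_pattern P pat_H \<Longrightarrow> \<exists>y a b c. a < b \<and> b < c \<and> (a,y)\<in>P \<and> (b,y)\<notin>P \<and> (c,y)\<in>P"
  unfolding contains_pattern_def pat_H_def Let_def
proof (elim exE conjE)
  fix f g :: "nat \<Rightarrow> int"
  assume g: "strict_mono_on {0..<length (hd [[1::nat, 0, 1]])} g"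
    and m: "\<forall>i<length [[1::nat, 0, 1]]. \<forall>j<length (hd [[1::nat, 0, 1]]). ((g j, f i) \<in> P) = ([[1::nat, 0, 1]] ! (length [[1::nat, 0, 1]] - 1 - i) ! j = 1)"
  have "g 0 < g 1" "g 1 < g 2" using g by (auto intro!: strict_mono_onD[OF g])
  moreover have "(g 0, f 0) \<in> P" "(g 1, f 0) \<notin> P" "(g 2, f 0) \<in> P" using m by auto
  ultimately show ?thesis by blast
qed

lemma H_intro:
  assumes "finite P" "a < b" "b < c" "(a,y)\<in>P" "(b,y)\<notin>P" "(c,y)\<in>P"
  shows "contains_pattern P pat_H"
  unfolding contains_pattern_def pat_H_def Let_def
  apply (rule exI[of _ "\<lambda>_. y"], rule exI[of _ "\<lambda>j. if j = 0 then a else if j = 1 then b else c"])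
  using assms mem_bb[OF assms(1) assms(4)] mem_bb[OF assms(1) assms(6)]
  apply (auto simp: strict_mono_on_def less_Suc_eq numeral_3_eq_3)
  done

lemma V_imp: "contains_pattern P pat_V \<Longrightarrow> \<exists>x a b c. a < b \<and> b < c \<and> (x,a)\<in>P \<and> (x,b)\<notin>P \<and> (x,c)\<in>P"
  unfolding contains_pattern_def pat_V_def Let_def
  apply (elim exE conjE)
  subgoal premises prems for f g
  proof -
    have "f 0 < f 1" "f 1 < f 2" using prems(1) by (auto intro!: strict_mono_onD[OF prems(1)])
    moreover have "(g 0, f 0) \<in> P" "(g 0, f 1) \<notin> P" "(g 0, f 2) \<in> P" using prems(5) by auto
    ultimately show ?thesis by blast
  qed
  done

lemma V_intro:
  assumes "finite P" "a < b" "b < c" "(x,a)\<in>P" "(x,b)\<notin>P" "(x,c)\<in>P"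
  shows "contains_pattern P pat_V"
  unfolding contains_pattern_def pat_V_def Let_def
  apply (rule exI[of _ "\<lambda>j. if j = 0 then a else if j = 1 then b else c"], rule exI[of _ "\<lambda>_. x"])
  using assms mem_bb[OF assms(1) assms(4)] mem_bb[OF assms(1) assms(6)]
  apply (auto simp: strict_mono_on_def less_Suc_eq numeral_3_eq_3)
  done

lemma S1_imp: "contains_pattern P pat_S1 \<Longrightarrow> \<exists>a b y1 y2. a < b \<and> y1 < y2 \<and> (a,y2)\<in>P \<and> (b,y1)\<in>P \<and> (b,y2)\<notin>P \<and> (a,y1)\<notin>P"
  unfolding contains_pattern_def pat_S1_def Let_def
  apply (elim exE conjE)
  subgoal premises prems for f g
  proof -
    have "f 0 < f 1" using prems(1) by (auto intro!: strict_mono_onD[OF prems(1)])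
    moreover have "g 0 < g 1" using prems(2) by (auto intro!: strict_mono_onD[OF prems(2)])
    moreover have "(g 0, f 1) \<in> P" "(g 1, f 0) \<in> P" "(g 1, f 1) \<notin> P" "(g 0, f 0) \<notin> P" using prems(5) by auto
    ultimately show ?thesis by blast
  qed
  done

lemma S2_imp: "contains_pattern P pat_S2 \<Longrightarrow> \<exists>a b y1 y2. a < b \<and> y1 < y2 \<and> (a,y1)\<in>P \<and> (b,y2)\<in>P \<and> (a,y2)\<notin>P \<and> (b,y1)\<notin>P"
  unfolding contains_pattern_def pat_S2_def Let_def
  apply (elim exE conjE)
  subgoal premises prems for f g
  proof -
    have "f 0 < f 1" using prems(1) by (auto intro!: strict_mono_onD[OF prems(1)])
    moreover have "g 0 < g 1" using prems(2) by (auto intro!: strict_mono_onD[OF prems(2)])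
    moreover have "(g 0, f 0) \<in> P" "(g 1, f 1) \<in> P" "(g 0, f 1) \<notin> P" "(g 1, f 0) \<notin> P" using prems(5) by auto
    ultimately show ?thesis by blast
  qed
  done

lemma S1_intro:
  assumes "finite P" "a < b" "y1 < y2" "(a,y2)\<in>P" "(b,y1)\<in>P" "(b,y2)\<notin>P" "(a,y1)\<notin>P"
  shows "contains_pattern P pat_S1"
  unfolding contains_pattern_def pat_S1_def Let_def
  apply (rule exI[of _ "\<lambda>j. if j = 0 then y1 else y2"], rule exI[of _ "\<lambda>j. if j = 0 then a else b"])
  using assms mem_bb[OF assms(1) assms(4)] mem_bb[OF assms(1) assms(5)]
  apply (auto simp: strict_mono_on_def less_Suc_eq)
  done

lemma S2_intro:
  assumes "finite P" "a < b" "y1 < y2" "(a,y1)\<in>P" "(b,y2)\<in>P" "(a,y2)\<notin>P" "(b,y1)\<notin>P"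
  shows "contains_pattern P pat_S2"
  unfolding contains_pattern_def pat_S2_def Let_def
  apply (rule exI[of _ "\<lambda>j. if j = 0 then y1 else y2"], rule exI[of _ "\<lambda>j. if j = 0 then a else b"])
  using assms mem_bb[OF assms(1) assms(4)] mem_bb[OF assms(1) assms(5)]
  apply (auto simp: strict_mono_on_def less_Suc_eq)
  done

lemma rowc: "convex_polyomino P \<Longrightarrow> (x1,y) \<in> P \<Longrightarrow> (x2,y) \<in> P \<Longrightarrow> min x1 x2 \<le> x \<Longrightarrow> x \<le> max x1 x2 \<Longrightarrow> (x,y) \<in> P"
  unfolding convex_polyomino_def by (metis max_def min_def)
lemma colc: "convex_polyomino P \<Longrightarrow> (x,y1) \<in> P \<Longrightarrow> (x,y2) \<in> P \<Longrightarrow> min y1 y2 \<le> y \<Longrightarrow> y \<le> max y1 y2 \<Longrightarrow> (x,y) \<in> P"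
  unfolding convex_polyomino_def by (metis max_def min_def)

lemma sgn_abs_int: "sgn (d::int) * int (nat \<bar>d\<bar>) = d"
  by (simp add: sgn_mult_abs)

lemma sgn_between:
  fixes a b :: int
  assumes "k \<le> nat \<bar>b - a\<bar>"
  shows "min a b \<le> a + sgn (b - a) * int k \<and> a + sgn (b - a) * int k \<le> max a b"
  using assms by (cases "a < b"; cases "a = b") (auto simp: sgn_if)

lemma L_path:
  assumes conv: "convex_polyomino P" and p: "(x1,y1)\<in>P" and c: "(x2,y1) \<in> P" and q: "(x2,y2) \<in> P"
  shows "\<exists>xs. is_path P xs \<and> hd xs = (x1,y1) \<and> last xs = (x2,y2) \<and> monotone_path xs \<and> direction_changes xs \<le> 1"
proof -
  define nx where "nx = nat \<bar>x2 - x1\<bar>"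
  define ny where "ny = nat \<bar>y2 - y1\<bar>"
  define dx where "dx = sgn (x2 - x1)"
  define dy where "dy = sgn (y2 - y1)"
  define F where "F k = (if k < nx then (x1 + dx * int k, y1) else (x2, y1 + dy * int (k - nx)))" for k
  define xs where "xs = map F [0..<nx+ny+1]"
  have hx: "dx * int nx = x2 - x1" unfolding dx_def nx_def by (rule sgn_abs_int)
  have hy: "dy * int ny = y2 - y1" unfolding dy_def ny_def by (rule sgn_abs_int)
  have dxnz: "nx > 0 \<Longrightarrow> \<bar>dx\<bar> = 1" unfolding dx_def nx_def by (auto simp: abs_sgn_eq)
  have dynz: "ny > 0 \<Longrightarrow> \<bar>dy\<bar> = 1" unfolding dy_def ny_def by (auto simp: abs_sgn_eq)
  have len: "length xs = nx + ny + 1" unfolding xs_def by simp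
  have nth: "i < nx + ny + 1 \<Longrightarrow> xs ! i = F i" for i unfolding xs_def by (simp del: upt_Suc)
  have stp: "step xs i = (if i < nx then (dx, 0) else (0, dy))" if "Suc i < nx + ny + 1" for i
  proof -
    have e: "xs ! i = F i" "xs ! Suc i = F (Suc i)" using that nth by auto
    show ?thesis
    proof (cases "Suc i < nx")
      case True thus ?thesis unfolding step_def e F_def by (simp add: algebra_simps)
    next
      case False
      show ?thesis
      proof (cases "i < nx")
        case True
        with False have "Suc i = nx" by simp
        hence "int nx = int i + 1" by simp
        hence "x2 = dx + (x1 + dx * int i)" using hx by (simp add: algebra_simps)
        thus ?thesis unfolding step_def e F_def using True \<open>Suc i = nx\<close> by (simp add: algebra_simps)
      next
        case False
        hence "int (Suc i - nx) = int (i - nx) + 1" by simp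
        thus ?thesis unfolding step_def e F_def using False by (simp add: algebra_simps)
      qed
    qed
  qed
  have hs: "horizontal_step xs i \<longleftrightarrow> i < nx" if "Suc i < nx + ny + 1" for i
    using stp[OF that] dynz that unfolding horizontal_step_def by auto
  have dist: "distinct xs"
    unfolding xs_def distinct_map
  proof (intro conjI inj_onI)
    fix i j assume i: "i \<in> set [0..<nx+ny+1]" and j: "j \<in> set [0..<nx+ny+1]" and e: "F i = F j"
    show "i = j"
    proof (cases "i < nx"; cases "j < nx")
      assume "i < nx" "j < nx"
      then show ?thesis using e dxnz[of] unfolding F_def by auto
    next
      assume a: "i < nx" "\<not> j < nx"
      hence "x1 + dx * int i = x2" using e unfolding F_def by auto
      hence "dx * int i = dx * int nx" using hx by simp
      hence "int i = int nx" using dxnz a by auto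
      thus ?thesis using a by simp
    next
      assume a: "\<not> i < nx" "j < nx"
      hence "x1 + dx * int j = x2" using e unfolding F_def by auto
      hence "dx * int j = dx * int nx" using hx by simp
      hence "int j = int nx" using dxnz a by auto
      thus ?thesis using a by simp
    next
      assume a: "\<not> i < nx" "\<not> j < nx"
      hence e2: "dy * int (i - nx) = dy * int (j - nx)" using e unfolding F_def by auto
      show ?thesis
      proof (cases "ny = 0")
        case True thus ?thesis using a i j by auto
      next
        case False
        hence "int (i - nx) = int (j - nx)" using e2 dynz by auto
        thus ?thesis using a by simp
      qed
    qed
  qed simp
  have sub: "set xs \<subseteq> P"
  proof
    fix z assume "z \<in> set xs"
    then obtain k where k: "k < nx + ny + 1" "z = F k" unfolding xs_def by (auto simp del: upt_Suc)
    show "z \<in> P"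
    proof (cases "k < nx")
      case True
      have "min x1 x2 \<le> x1 + dx * int k \<and> x1 + dx * int k \<le> max x1 x2"
        unfolding dx_def using True nx_def by (intro sgn_between) simp
      thus ?thesis using rowc[OF conv p c] k True unfolding F_def by auto
    next
      case False
      have "min y1 y2 \<le> y1 + dy * int (k - nx) \<and> y1 + dy * int (k - nx) \<le> max y1 y2"
        unfolding dy_def using False k ny_def by (intro sgn_between) simp
      thus ?thesis using colc[OF conv c q] k False unfolding F_def by auto
    qed
  qed
  have adj: "adjacent (xs ! i) (xs ! Suc i)" if "Suc i < length xs" for i
  proof -
    have "step xs i = (if i < nx then (dx, 0) else (0, dy))" using stp that len by simp
    moreover have "i < nx \<Longrightarrow> \<bar>dx\<bar> = 1" using dxnz by simp
    moreover have "\<not> i < nx \<Longrightarrow> \<bar>dy\<bar> = 1" using dynz that len by simp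
    ultimately show ?thesis unfolding adjacent_def step_def
      by (auto split: if_splits simp: abs_minus_commute)
  qed
  have hd: "hd xs = (x1, y1)"
  proof -
    have "hd xs = F 0" unfolding xs_def by (simp del: upt_Suc add: hd_map)
    thus ?thesis unfolding F_def using hx by (cases "nx = 0") auto
  qed
  have lst: "last xs = (x2, y2)"
  proof -
    have "xs \<noteq> []" using len by auto
    hence "last xs = xs ! (nx + ny)" using len by (simp add: last_conv_nth)
    also have "\<dots> = F (nx + ny)" using nth by simp
    finally show ?thesis unfolding F_def using hy by simp
  qed
  have mono: "monotone_path xs"
    unfolding monotone_path_def using stp hs len by auto
  have dc: "direction_changes xs \<le> 1"
  proof -
    have "{i. Suc (Suc i) < length xs \<and> horizontal_step xs i \<noteq> horizontal_step xs (Suc i)} \<subseteq> {nx - 1}"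
      using hs len by auto
    hence "card {i. Suc (Suc i) < length xs \<and> horizontal_step xs i \<noteq> horizontal_step xs (Suc i)} \<le> card {nx - 1}"
      by (intro card_mono) auto
    thus ?thesis unfolding direction_changes_def by simp
  qed
  show ?thesis
    using dist sub adj hd lst mono dc len unfolding is_path_def by (intro exI[of _ xs]) auto
qed

lemma L_path2:
  assumes conv: "convex_polyomino P" and p: "(x1,y1)\<in>P" and c: "(x1,y2) \<in> P" and q: "(x2,y2) \<in> P"
  shows "\<exists>xs. is_path P xs \<and> hd xs = (x1,y1) \<and> last xs = (x2,y2) \<and> monotone_path xs \<and> direction_changes xs \<le> 1"
proof -
  define nx where "nx = nat \<bar>x2 - x1\<bar>"
  define ny where "ny = nat \<bar>y2 - y1\<bar>"
  define dx where "dx = sgn (x2 - x1)"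
  define dy where "dy = sgn (y2 - y1)"
  define F where "F k = (if k < ny then (x1, y1 + dy * int k) else (x1 + dx * int (k - ny), y2))" for k
  define xs where "xs = map F [0..<nx+ny+1]"
  have hx: "dx * int nx = x2 - x1" unfolding dx_def nx_def by (rule sgn_abs_int)
  have hy: "dy * int ny = y2 - y1" unfolding dy_def ny_def by (rule sgn_abs_int)
  have dxnz: "nx > 0 \<Longrightarrow> \<bar>dx\<bar> = 1" unfolding dx_def nx_def by (auto simp: abs_sgn_eq)
  have dynz: "ny > 0 \<Longrightarrow> \<bar>dy\<bar> = 1" unfolding dy_def ny_def by (auto simp: abs_sgn_eq)
  have len: "length xs = nx + ny + 1" unfolding xs_def by simp
  have nth: "i < nx + ny + 1 \<Longrightarrow> xs ! i = F i" for i unfolding xs_def by (simp del: upt_Suc)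
  have stp: "step xs i = (if i < ny then (0, dy) else (dx, 0))" if "Suc i < nx + ny + 1" for i
  proof -
    have e: "xs ! i = F i" "xs ! Suc i = F (Suc i)" using that nth by auto
    show ?thesis
    proof (cases "Suc i < ny")
      case True thus ?thesis unfolding step_def e F_def by (simp add: algebra_simps)
    next
      case False
      show ?thesis
      proof (cases "i < ny")
        case True
        with False have "Suc i = ny" by simp
        hence "int ny = int i + 1" by simp
        hence "y2 = dy + (y1 + dy * int i)" using hy by (simp add: algebra_simps)
        thus ?thesis unfolding step_def e F_def using True \<open>Suc i = ny\<close> by (simp add: algebra_simps)
      next
        case False
        hence "int (Suc i - ny) = int (i - ny) + 1" by simp
        thus ?thesis unfolding step_def e F_def using False by (simp add: algebra_simps)
      qed
    qed
  qed
  have hs: "horizontal_step xs i \<longleftrightarrow> \<not> i < ny" if "Suc i < nx + ny + 1" for i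
    using stp[OF that] dynz that unfolding horizontal_step_def by auto
  have dist: "distinct xs"
    unfolding xs_def distinct_map
  proof (intro conjI inj_onI)
    fix i j assume i: "i \<in> set [0..<nx+ny+1]" and j: "j \<in> set [0..<nx+ny+1]" and e: "F i = F j"
    show "i = j"
    proof (cases "i < ny"; cases "j < ny")
      assume "i < ny" "j < ny"
      then show ?thesis using e dynz[of] unfolding F_def by auto
    next
      assume a: "i < ny" "\<not> j < ny"
      hence "y1 + dy * int i = y2" using e unfolding F_def by auto
      hence "dy * int i = dy * int ny" using hy by simp
      hence "int i = int ny" using dynz a by auto
      thus ?thesis using a by simp
    next
      assume a: "\<not> i < ny" "j < ny"
      hence "y1 + dy * int j = y2" using e unfolding F_def by auto
      hence "dy * int j = dy * int ny" using hy by simp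
      hence "int j = int ny" using dynz a by auto
      thus ?thesis using a by simp
    next
      assume a: "\<not> i < ny" "\<not> j < ny"
      hence e2: "dx * int (i - ny) = dx * int (j - ny)" using e unfolding F_def by auto
      show ?thesis
      proof (cases "nx = 0")
        case True thus ?thesis using a i j by auto
      next
        case False
        hence "int (i - ny) = int (j - ny)" using e2 dxnz by auto
        thus ?thesis using a by simp
      qed
    qed
  qed simp
  have sub: "set xs \<subseteq> P"
  proof
    fix z assume "z \<in> set xs"
    then obtain k where k: "k < nx + ny + 1" "z = F k" unfolding xs_def by (auto simp del: upt_Suc)
    show "z \<in> P"
    proof (cases "k < ny")
      case True
      have "min y1 y2 \<le> y1 + dy * int k \<and> y1 + dy * int k \<le> max y1 y2"
        unfolding dy_def using True ny_def by (intro sgn_between) simp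
      thus ?thesis using colc[OF conv p c] k True unfolding F_def by auto
    next
      case False
      have "min x1 x2 \<le> x1 + dx * int (k - ny) \<and> x1 + dx * int (k - ny) \<le> max x1 x2"
        unfolding dx_def using False k nx_def by (intro sgn_between) simp
      thus ?thesis using rowc[OF conv c q] k False unfolding F_def by auto
    qed
  qed
  have adj: "adjacent (xs ! i) (xs ! Suc i)" if "Suc i < length xs" for i
  proof -
    have "step xs i = (if i < ny then (0, dy) else (dx, 0))" using stp that len by simp
    moreover have "i < ny \<Longrightarrow> \<bar>dy\<bar> = 1" using dynz by simp
    moreover have "\<not> i < ny \<Longrightarrow> \<bar>dx\<bar> = 1" using dxnz that len by simp
    ultimately show ?thesis unfolding adjacent_def step_def
      by (auto split: if_splits simp: abs_minus_commute)
  qed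
  have hd: "hd xs = (x1, y1)"
  proof -
    have "hd xs = F 0" unfolding xs_def by (simp del: upt_Suc add: hd_map)
    thus ?thesis unfolding F_def using hy by (cases "ny = 0") auto
  qed
  have lst: "last xs = (x2, y2)"
  proof -
    have "xs \<noteq> []" using len by auto
    hence "last xs = xs ! (nx + ny)" using len by (simp add: last_conv_nth)
    also have "\<dots> = F (nx + ny)" using nth by simp
    finally show ?thesis unfolding F_def using hx by (cases "nx = 0") auto
  qed
  have mono: "monotone_path xs"
    unfolding monotone_path_def using stp hs len by auto
  have dc: "direction_changes xs \<le> 1"
  proof -
    have "{i. Suc (Suc i) < length xs \<and> horizontal_step xs i \<noteq> horizontal_step xs (Suc i)} \<subseteq> {ny - 1}"
      using hs len by auto
    hence "card {i. Suc (Suc i) < length xs \<and> horizontal_step xs i \<noteq> horizontal_step xs (Suc i)} \<le> card {ny - 1}"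
      by (intro card_mono) auto
    thus ?thesis unfolding direction_changes_def by simp
  qed
  show ?thesis
    using dist sub adj hd lst mono dc len unfolding is_path_def by (intro exI[of _ xs]) auto
qed

lemma walk:
  assumes "\<forall>i. a \<le> i \<and> i < a + k \<longrightarrow> step xs i = s" "a + k < length xs"
  shows "xs ! (a + k) = (fst (xs ! a) + int k * fst s, snd (xs ! a) + int k * snd s)"
  using assms
proof (induction k)
  case 0 thus ?case by simp
next
  case (Suc k)
  have IH: "xs ! (a + k) = (fst (xs ! a) + int k * fst s, snd (xs ! a) + int k * snd s)"
    using Suc by auto
  have "step xs (a + k) = s" using Suc.prems by auto
  hence "fst (xs ! Suc (a + k)) = fst (xs ! (a+k)) + fst s" "snd (xs ! Suc (a + k)) = snd (xs ! (a+k)) + snd s"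
    unfolding step_def by auto
  thus ?case using IH by (simp add: algebra_simps prod_eq_iff)
qed

lemma change_between:
  assumes "i \<le> j" "Suc j < length xs" "horizontal_step xs i \<noteq> horizontal_step xs j"
  shows "\<exists>d. i \<le> d \<and> d < j \<and> Suc (Suc d) < length xs \<and> horizontal_step xs d \<noteq> horizontal_step xs (Suc d)"
  using assms
proof (induction j)
  case 0 thus ?case by simp
next
  case (Suc j)
  show ?case
  proof (cases "i \<le> j \<and> horizontal_step xs i \<noteq> horizontal_step xs j")
    case True
    then obtain d where "i \<le> d \<and> d < j \<and> Suc (Suc d) < length xs \<and> horizontal_step xs d \<noteq> horizontal_step xs (Suc d)"
      using Suc by auto
    thus ?thesis by (intro exI[of _ d]) auto
  next
    case False
    thus ?thesis using Suc.prems by (intro exI[of _ j]) (auto simp: le_Suc_eq)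
  qed
qed

lemma vert_fst: "adjacent (xs ! i) (xs ! Suc i) \<Longrightarrow> \<not> horizontal_step xs i \<Longrightarrow> fst (step xs i) = 0"
  unfolding adjacent_def horizontal_step_def step_def by auto

lemma path_corner:
  assumes path: "is_path P xs" and mono: "monotone_path xs" and dc: "direction_changes xs \<le> 1"
  shows "\<exists>m\<in>P. (fst m = fst (last xs) \<and> snd m = snd (hd xs)) \<or> (fst m = fst (hd xs) \<and> snd m = snd (last xs))"
proof -
  define n where "n = length xs"
  define h where "h = horizontal_step xs"
  define D where "D = {i. Suc (Suc i) < n \<and> h i \<noteq> h (Suc i)}"
  have ne: "xs \<noteq> []" and sub: "set xs \<subseteq> P" and adj: "\<And>i. Suc i < n \<Longrightarrow> adjacent (xs ! i) (xs ! Suc i)"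
    using path unfolding is_path_def n_def by auto
  have M1: "\<And>i j. Suc i < length xs \<Longrightarrow> Suc j < length xs \<Longrightarrow> horizontal_step xs i \<Longrightarrow> horizontal_step xs j \<Longrightarrow> step xs i = step xs j"
    using mono unfolding monotone_path_def by blast
  have M2: "\<And>i j. Suc i < length xs \<Longrightarrow> Suc j < length xs \<Longrightarrow> \<not> horizontal_step xs i \<Longrightarrow> \<not> horizontal_step xs j \<Longrightarrow> step xs i = step xs j"
    using mono unfolding monotone_path_def by blast
  have hd: "hd xs = xs ! 0" using ne by (simp add: hd_conv_nth)
  have lst: "last xs = xs ! (n - 1)" using ne n_def by (simp add: last_conv_nth)
  have inP: "i < n \<Longrightarrow> xs ! i \<in> P" for i using sub n_def by auto
  show ?thesis
  proof (cases "n = 1")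
    case True
    thus ?thesis using hd lst inP by (intro bexI[of _ "xs ! 0"]) auto
  next
    case False
    hence n2: "n \<ge> 2" using ne n_def by (cases n) auto
    have finD: "finite D" unfolding D_def by (rule finite_subset[of _ "{..<n}"]) auto
    have cardD: "card D \<le> 1" using dc unfolding direction_changes_def D_def n_def h_def by simp
    have cb: "\<exists>d\<in>D. i \<le> d \<and> d < j" if "i \<le> j" "Suc j < n" "h i \<noteq> h j" for i j
    proof -
      have "Suc j < length xs" "horizontal_step xs i \<noteq> horizontal_step xs j" using that unfolding h_def n_def by simp_all
      from change_between[OF that(1) this] obtain d where d: "i \<le> d \<and> d < j \<and> Suc (Suc d) < length xs \<and> horizontal_step xs d \<noteq> horizontal_step xs (Suc d)" ..
      hence "d \<in> D" unfolding D_def h_def n_def by simp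
      thus ?thesis using d by auto
    qed
    obtain c where c: "Suc c < n" and c1: "\<forall>i\<le>c. h i = h 0"
      and c2: "\<forall>i. c < i \<and> Suc i < n \<longrightarrow> h i = (\<not> h 0)"
    proof (cases "D = {}")
      case True
      show ?thesis
      proof (rule that[of "n - 2"])
        show "Suc (n - 2) < n" using n2 by simp
        show "\<forall>i\<le>n - 2. h i = h 0"
        proof (intro allI impI, rule ccontr)
          fix i assume "i \<le> n - 2" "h i \<noteq> h 0"
          then show False using cb[of 0 i] True n2 by force
        qed
        show "\<forall>i. n - 2 < i \<and> Suc i < n \<longrightarrow> h i = (\<not> h 0)" by auto
      qed
    next
      case False
      then obtain c where cD: "c \<in> D" by auto
      have uniq: "d \<in> D \<Longrightarrow> d = c" for d using cardD finD cD card_le_Suc0_iff_eq by fastforce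
      have cn: "Suc (Suc c) < n" and hc: "h c \<noteq> h (Suc c)" using cD unfolding D_def by auto
      show ?thesis
      proof (rule that[of c])
        show "Suc c < n" using cn by simp
        show c1: "\<forall>i\<le>c. h i = h 0"
        proof (intro allI impI)
          fix i assume "i \<le> c"
          show "h i = h 0"
          proof (rule ccontr)
            assume "h i \<noteq> h 0"
            then obtain d where "d \<in> D" "d < i" using cb[of 0 i] \<open>i \<le> c\<close> cn by force
            thus False using uniq \<open>i \<le> c\<close> by fastforce
          qed
        qed
        show "\<forall>i. c < i \<and> Suc i < n \<longrightarrow> h i = (\<not> h 0)"
        proof (intro allI impI)
          fix i assume i: "c < i \<and> Suc i < n"
          have "h i = h (Suc c)"
          proof (rule ccontr)
            assume "h i \<noteq> h (Suc c)"
            then obtain d where "d \<in> D" "Suc c \<le> d" using cb[of "Suc c" i] i by force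
            thus False using uniq by fastforce
          qed
          moreover have "h c = h 0" using c1[rule_format, of c] by simp
          ultimately show "h i = (\<not> h 0)" using hc by (cases "h 0"; cases "h i"; simp)
        qed
      qed
    qed
    define s1 where "s1 = step xs 0"
    define s2 where "s2 = step xs (Suc c)"
    define k where "k = n - 1 - Suc c"
    have st1: "\<forall>i. 0 \<le> i \<and> i < 0 + Suc c \<longrightarrow> step xs i = s1"
    proof (intro allI impI)
      fix i assume i: "0 \<le> i \<and> i < 0 + Suc c"
      hence a: "Suc i < length xs" "Suc 0 < length xs" "h i = h 0" using c c1[rule_format, of i] n_def by auto
      show "step xs i = s1"
        unfolding s1_def
      proof (cases "h 0")
        case True thus "step xs i = step xs 0" using M1[OF a(1) a(2)] a(3) unfolding h_def by simp
      next
        case False thus "step xs i = step xs 0" using M2[OF a(1) a(2)] a(3) unfolding h_def by simp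
      qed
    qed
    have m: "xs ! Suc c = (fst (xs ! 0) + int (Suc c) * fst s1, snd (xs ! 0) + int (Suc c) * snd s1)"
      using walk[OF st1] c n_def by simp
    have st2: "\<forall>i. Suc c \<le> i \<and> i < Suc c + k \<longrightarrow> step xs i = s2"
    proof (intro allI impI)
      fix i assume i: "Suc c \<le> i \<and> i < Suc c + k"
      have si: "Suc i < n" using i k_def c by arith
      have hh: "h i = h (Suc c)"
      proof (cases "i = Suc c")
        case False
        hence "c < i" "c < Suc c" "Suc (Suc c) < n" using i si by auto
        thus ?thesis using c2 si by auto
      qed simp
      have a: "Suc i < length xs" "Suc (Suc c) < length xs" using si i n_def by auto
      show "step xs i = s2"
        unfolding s2_def
      proof (cases "h (Suc c)")
        case True thus "step xs i = step xs (Suc c)" using M1[OF a(1) a(2)] hh unfolding h_def by simp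
      next
        case False thus "step xs i = step xs (Suc c)" using M2[OF a(1) a(2)] hh unfolding h_def by simp
      qed
    qed
    have nk: "Suc c + k = n - 1" using c k_def by simp
    have l: "xs ! (n - 1) = (fst (xs ! Suc c) + int k * fst s2, snd (xs ! Suc c) + int k * snd s2)"
      using walk[OF st2] nk n2 n_def by simp
    have mP: "xs ! Suc c \<in> P" using inP c by simp
    show ?thesis
    proof (cases "h 0")
      case True
      have "snd s1 = 0" using True unfolding h_def horizontal_step_def s1_def by simp
      moreover have "k = 0 \<or> fst s2 = 0"
      proof (cases "k = 0")
        case False
        hence "Suc (Suc c) < n" using k_def by simp
        hence "\<not> h (Suc c)" using c2 True by auto
        thus ?thesis using vert_fst adj \<open>Suc (Suc c) < n\<close> unfolding s2_def h_def by blast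
      qed simp
      ultimately show ?thesis using m l mP hd lst by (intro bexI[of _ "xs ! Suc c"]) auto
    next
      case False
      have "fst s1 = 0" using False vert_fst adj n2 unfolding h_def s1_def by auto
      moreover have "k = 0 \<or> snd s2 = 0"
      proof (cases "k = 0")
        case False
        hence "Suc (Suc c) < n" using k_def by simp
        hence "h (Suc c)" using c2 \<open>\<not> h 0\<close> by auto
        thus ?thesis unfolding s2_def h_def horizontal_step_def by simp
      qed simp
      ultimately show ?thesis using m l mP hd lst by (intro bexI[of _ "xs ! Suc c"]) auto
    qed
  qed
qed

lemma corner:
  assumes fin: "finite P" and av: "avoids P {pat_H, pat_V, pat_S1, pat_S2}"
    and p: "(x1,y1) \<in> P" and q: "(x2,y2) \<in> P"
  shows "(x2,y1) \<in> P \<or> (x1,y2) \<in> P"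
proof (rule ccontr)
  assume n: "\<not> ((x2,y1) \<in> P \<or> (x1,y2) \<in> P)"
  have s1: "\<not> contains_pattern P pat_S1" and s2: "\<not> contains_pattern P pat_S2"
    using av unfolding avoids_def by auto
  have "x1 \<noteq> x2" "y1 \<noteq> y2" using n p q by auto
  then consider "x1 < x2" "y1 < y2" | "x1 < x2" "y2 < y1" | "x2 < x1" "y1 < y2" | "x2 < x1" "y2 < y1"
    by linarith
  thus False
  proof cases
    case 1 thus False using S2_intro[OF fin 1 p q] n s2 by simp
  next
    case 2 thus False using S1_intro[OF fin 2 p q] n s1 by simp
  next
    case 3 thus False using S1_intro[OF fin 3 q p] n s1 by simp
  next
    case 4 thus False using S2_intro[OF fin 4 q p] n s2 by simp
  qed
qed

theorem proposition15:
  "{P. polyomino P \<and> L_convex P} =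
   {P. polyomino P \<and> avoids P {pat_H, pat_V, pat_S1, pat_S2}}"
proof (intro set_eqI iffI; clarsimp)
  fix P assume pol: "polyomino P" and L: "L_convex P"
  have conv: "convex_polyomino P" using L unfolding L_convex_def by simp
  have corn: "\<exists>m\<in>P. (fst m = fst q \<and> snd m = snd p) \<or> (fst m = fst p \<and> snd m = snd q)"
    if "p \<in> P" "q \<in> P" for p q
  proof -
    have "\<forall>p\<in>P. \<forall>q\<in>P. \<exists>xs. is_path P xs \<and> hd xs = p \<and> last xs = q \<and> monotone_path xs \<and> direction_changes xs \<le> 1"
      using L unfolding L_convex_def by (rule conjunct2)
    from this[rule_format, OF that] obtain xs where xs0: "is_path P xs \<and> hd xs = p \<and> last xs = q \<and> monotone_path xs \<and> direction_changes xs \<le> 1" ..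
    hence xs: "is_path P xs" "hd xs = p" "last xs = q" "monotone_path xs" "direction_changes xs \<le> 1" by simp_all
    show ?thesis unfolding xs(2)[symmetric] xs(3)[symmetric] by (rule path_corner[OF xs(1) xs(4) xs(5)])
  qed
  show "avoids P {pat_H, pat_V, pat_S1, pat_S2}"
    unfolding avoids_def
  proof (intro ballI notI)
    fix M assume M: "M \<in> {pat_H, pat_V, pat_S1, pat_S2}" and c: "contains_pattern P M"
    from M consider "M = pat_H" | "M = pat_V" | "M = pat_S1" | "M = pat_S2" by blast
    thus False
    proof cases
      case 1
      then obtain y a b c where "a < b" "b < c" "(a,y)\<in>P" "(b,y)\<notin>P" "(c,y)\<in>P" using H_imp c by blast
      thus False using rowc[OF conv, of a y c b] by simp
    next
      case 2
      then obtain x a b c where "a < b" "b < c" "(x,a)\<in>P" "(x,b)\<notin>P" "(x,c)\<in>P" using V_imp c by blast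
      thus False using colc[OF conv, of x a c b] by simp
    next
      case 3
      then obtain a b y1 y2 where h: "a < b" "y1 < y2" "(a,y2)\<in>P" "(b,y1)\<in>P" "(b,y2)\<notin>P" "(a,y1)\<notin>P"
        using S1_imp c by blast
      from corn[OF h(3) h(4)] obtain m where "m \<in> P" "(fst m = b \<and> snd m = y2) \<or> (fst m = a \<and> snd m = y1)" by auto
      thus False using h by (cases m) auto
    next
      case 4
      then obtain a b y1 y2 where h: "a < b" "y1 < y2" "(a,y1)\<in>P" "(b,y2)\<in>P" "(a,y2)\<notin>P" "(b,y1)\<notin>P"
        using S2_imp c by blast
      from corn[OF h(3) h(4)] obtain m where "m \<in> P" "(fst m = b \<and> snd m = y1) \<or> (fst m = a \<and> snd m = y2)" by auto
      thus False using h by (cases m) auto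
    qed
  qed
next
  fix P assume pol: "polyomino P" and av: "avoids P {pat_H, pat_V, pat_S1, pat_S2}"
  have fin: "finite P" using pol unfolding polyomino_def by simp
  have nH: "\<not> contains_pattern P pat_H" and nV: "\<not> contains_pattern P pat_V"
    using av unfolding avoids_def by auto
  have row: "(x, y) \<in> P" if "(x1, y) \<in> P" "(x2, y) \<in> P" "x1 \<le> x" "x \<le> x2" for x1 x2 x y
  proof (rule ccontr)
    assume "(x, y) \<notin> P"
    hence "x1 < x" "x < x2" using that by (auto simp: order.order_iff_strict)
    thus False using H_intro[OF fin _ _ that(1) \<open>(x, y) \<notin> P\<close> that(2)] nH by blast
  qed
  have col: "(x, y) \<in> P" if "(x, y1) \<in> P" "(x, y2) \<in> P" "y1 \<le> y" "y \<le> y2" for y1 y2 x y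
  proof (rule ccontr)
    assume "(x, y) \<notin> P"
    hence "y1 < y" "y < y2" using that by (auto simp: order.order_iff_strict)
    thus False using V_intro[OF fin _ _ that(1) \<open>(x, y) \<notin> P\<close> that(2)] nV by blast
  qed
  have conv: "convex_polyomino P"
    unfolding convex_polyomino_def using pol row col by blast
  show "L_convex P"
    unfolding L_convex_def
  proof (intro conjI conv ballI)
    fix p q assume p: "p \<in> P" and q: "q \<in> P"
    obtain x1 y1 x2 y2 where pq: "p = (x1,y1)" "q = (x2,y2)" by (cases p, cases q)
    have "(x2,y1) \<in> P \<or> (x1,y2) \<in> P" using corner[OF fin av] p q pq by simp
    thus "\<exists>xs. is_path P xs \<and> hd xs = p \<and> last xs = q \<and> monotone_path xs \<and> direction_changes xs \<le> 1"
      using L_path[OF conv] L_path2[OF conv] p q pq by blast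
  qed
qed

end
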